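(* Let $\mathcal P$ be a CPOS $2n$-gon. The following are equivalent: (i) all vertices $D(i+\tfrac12)$, $1\le i\le n$, of the central symmetry set of $\mathcal P$ coincide (the central symmetry set reduces to a point); (ii) all vertices $M_i$, $1\le i\le n$, of the area evolute of $\mathcal P$ coincide (the area evolute reduces to a point); (iii) $\mathcal P$ is symmetric with respect to some point $O$, i.e. $P_{i+n}-O=O-P_i$ for all $1\le i\le n$.
   Context: A CPOS (convex, parallel opposite sides) $2n$-gon ($n\ge2$) is a closed planar polygon $\mathcal P$ with vertices $P_1,\dots,P_{2n}$ (indices taken modulo $2n$) which bounds a convex region, has no two adjacent sides parallel, has parallel opposite sides ($P_{i+n+1}-P_{i+n}$ is parallel to $P_{i+1}-P_i$ for all $i$), and is positively oriented: $[P_{i+1}-P_i,P_{j+1}-P_j]>0$ for $1\le i<j\le n$, where $[a,b]$ is the determinant of $a,b\in\mathbb R^2$. The great diagonal $d_i$ is the line through $P_i$ and $P_{i+n}$, and $D(i+\tfrac12)$ is the intersection point of $d_i$ and $d_{i+1}$. The central symmetry set is the closed polygon with vertices $D(1+\tfrac12),\dots,D(n+\tfrac12)$. $M_i=\tfrac12(P_i+P_{i+n})$, and the area evolute is the closed polygon with vertices $M_1,\dots,M_n$. *)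

theory Defs
  imports "HOL-Analysis.Analysis"
begin

text \<open>Points of the plane are vectors in real^2. A 2n-gon is given by a function
  P :: nat => real^2 with P i the vertex P_i, extended periodically
  (P (i + 2n) = P i), so indices are taken modulo 2n.\<close>

definition det2 :: "real^2 \<Rightarrow> real^2 \<Rightarrow> real" where
  "det2 a b = a$1 * b$2 - a$2 * b$1"

definition parallel2 :: "real^2 \<Rightarrow> real^2 \<Rightarrow> bool" where
  "parallel2 a b \<longleftrightarrow> det2 a b = 0"

definition polygon_curve :: "nat \<Rightarrow> (nat \<Rightarrow> real^2) \<Rightarrow> (real^2) set" where
  "polygon_curve n P = (\<Union>i\<in>{1..2*n}. closed_segment (P i) (P (i+1)))"

definition CPOS :: "nat \<Rightarrow> (nat \<Rightarrow> real^2) \<Rightarrow> bool" where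
  "CPOS n P \<longleftrightarrow>
     n \<ge> 2
   \<and> (\<forall>i. P (i + 2*n) = P i)
   \<comment> \<open>bounds a convex region\<close>
   \<and> (\<exists>K. convex K \<and> compact K \<and> interior K \<noteq> {} \<and> frontier K = polygon_curve n P)
   \<comment> \<open>no two adjacent sides parallel\<close>
   \<and> (\<forall>i. \<not> parallel2 (P (i+1) - P i) (P (i+2) - P (i+1)))
   \<comment> \<open>parallel opposite sides\<close>
   \<and> (\<forall>i. parallel2 (P (i+n+1) - P (i+n)) (P (i+1) - P i))
   \<comment> \<open>positively oriented\<close>
   \<and> (\<forall>i j. 1 \<le> i \<longrightarrow> i < j \<longrightarrow> j \<le> n \<longrightarrow> det2 (P (i+1) - P i) (P (j+1) - P j) > 0)"

definition great_diag :: "nat \<Rightarrow> (nat \<Rightarrow> real^2) \<Rightarrow> nat \<Rightarrow> (real^2) set" where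
  "great_diag n P i = affine hull {P i, P (i+n)}"

text \<open>Dpt n P i is the point D(i + 1/2), the intersection of d_i and d_(i+1).\<close>
definition Dpt :: "nat \<Rightarrow> (nat \<Rightarrow> real^2) \<Rightarrow> nat \<Rightarrow> real^2" where
  "Dpt n P i = (THE x. x \<in> great_diag n P i \<and> x \<in> great_diag n P (i+1))"

definition Mpt :: "nat \<Rightarrow> (nat \<Rightarrow> real^2) \<Rightarrow> nat \<Rightarrow> real^2" where
  "Mpt n P i = (1/2) *\<^sub>R (P i + P (i+n))"

end

theory Submission
  imports Defs
begin

lemma det2_sum_left: "det2 (sum f A) b = (\<Sum>k\<in>A. det2 (f k) b)"
  unfolding det2_def by (simp add: sum_distrib_right sum_subtractf)

lemma det2_key: "det2 ((D + (1-t) *\<^sub>R b) - (D + (1-s) *\<^sub>R a)) ((D - t *\<^sub>R b) - (D - s *\<^sub>R a)) = det2 a b * (t - s)"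
  unfolding det2_def by (simp add: algebra_simps)

lemma det2_scale_right: "det2 a (c *\<^sub>R b) = c * det2 a b"
  unfolding det2_def by (simp add: algebra_simps)
lemma det2_scale_left: "det2 (c *\<^sub>R a) b = c * det2 a b"
  unfolding det2_def by (simp add: algebra_simps)
lemma det2_add_right: "det2 a (b + c) = det2 a b + det2 a c"
  unfolding det2_def by (simp add: algebra_simps)
lemma det2_diff_right: "det2 a (b - c) = det2 a b - det2 a c"
  unfolding det2_def by (simp add: algebra_simps)
lemma det2_self: "det2 a a = 0"
  unfolding det2_def by (simp add: algebra_simps)
lemma det2_swap: "det2 a b = - det2 b a"
  unfolding det2_def by (simp add: algebra_simps)
lemma det2_zero_left: "det2 0 b = 0" unfolding det2_def by simp

lemma vec2_eq: "(x::real^2) = y \<longleftrightarrow> x$1 = y$1 \<and> x$2 = y$2"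
  by (metis exhaust_2 vec_eq_iff)

lemma par_scale:
  assumes "det2 a b = 0" "a \<noteq> 0"
  shows "\<exists>m. b = m *\<^sub>R a"
proof (cases "a$1 = 0")
  case True
  then have "a$2 \<noteq> 0" using assms(2) by (auto simp: vec2_eq)
  with assms(1) True show ?thesis
    by (intro exI[of _ "b$2 / a$2"]) (auto simp: vec2_eq det2_def field_simps)
next
  case False
  with assms(1) show ?thesis
    by (intro exI[of _ "b$1 / a$1"]) (auto simp: vec2_eq det2_def field_simps)
qed

lemma aff2: "x \<in> affine hull {a, b::real^2} \<longleftrightarrow> (\<exists>s. x = a + s *\<^sub>R (b - a))"
proof
  assume "x \<in> affine hull {a, b}"
  then obtain u v where x: "x = u *\<^sub>R a + v *\<^sub>R b" and uv: "u + v = 1"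
    unfolding affine_hull_2 by blast
  have "x = (1 - v) *\<^sub>R a + v *\<^sub>R b" using x uv by (metis add_diff_cancel_right')
  then have "x = a + v *\<^sub>R (b - a)" by (simp add: algebra_simps)
  then show "\<exists>s. x = a + s *\<^sub>R (b - a)" by blast
next
  assume "\<exists>s. x = a + s *\<^sub>R (b - a)"
  then obtain s where "x = a + s *\<^sub>R (b - a)" by blast
  then have "x = (1 - s) *\<^sub>R a + s *\<^sub>R b" by (simp add: algebra_simps)
  then show "x \<in> affine hull {a, b}" unfolding affine_hull_2 by force
qed

lemma lines_meet:
  fixes A B C E :: "real^2"
  assumes "det2 (B - A) (E - C) \<noteq> 0"
  shows "\<exists>!x. x \<in> affine hull {A, B} \<and> x \<in> affine hull {C, E}"
proof -
  define w where "w = B - A"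
  define u where "u = E - C"
  define c where "c = C - A"
  have d: "det2 w u \<noteq> 0" using assms by (simp add: w_def u_def)
  define s where "s = det2 c u / det2 w u"
  define t where "t = - det2 w c / det2 w u"
  have eq: "A + s *\<^sub>R w = C + t *\<^sub>R u"
    using d unfolding s_def t_def c_def
    by (simp add: vec2_eq det2_def field_simps)
  show ?thesis
  proof
    show "A + s *\<^sub>R w \<in> affine hull {A, B} \<and> A + s *\<^sub>R w \<in> affine hull {C, E}"
      unfolding aff2 using eq unfolding w_def u_def by blast
  next
    fix y assume y: "y \<in> affine hull {A, B} \<and> y \<in> affine hull {C, E}"
    then obtain s' t' where y1: "y = A + s' *\<^sub>R w" and y2: "y = C + t' *\<^sub>R u"
      unfolding aff2 w_def u_def by blast
    have "(A + s' *\<^sub>R w) - (A + s *\<^sub>R w) = (C + t' *\<^sub>R u) - (C + t *\<^sub>R u)" using y1 y2 eq by simp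
    then have "(s' - s) *\<^sub>R w = (t' - t) *\<^sub>R u" by (simp add: scaleR_left_diff_distrib)
    then have "det2 w ((s' - s) *\<^sub>R w) = det2 w ((t' - t) *\<^sub>R u)" by simp
    then have "t' = t" using d by (simp add: det2_scale_right det2_self)
    then show "y = A + s *\<^sub>R w" using y2 eq by simp
  qed
qed

lemma perp_sign:
  fixes a v u u' :: "real^2"
  assumes "a \<noteq> 0" "v \<noteq> 0" "a \<bullet> v = 0" "a \<bullet> u \<ge> 0" "a \<bullet> u' \<ge> 0"
  shows "det2 v u * det2 v u' \<ge> 0"
proof -
  have gen: "det2 v a * det2 v u = (v \<bullet> v) * (a \<bullet> u) - (v \<bullet> a) * (v \<bullet> u)" for u
    unfolding det2_def inner_vec_def by (simp add: sum_2) algebra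
  have i1: "det2 v a * det2 v u = (v \<bullet> v) * (a \<bullet> u)" for u
    using gen[of u] assms(3) by (simp add: inner_commute)
  have "det2 v a \<noteq> 0"
  proof
    assume "det2 v a = 0"
    have h1: "a$1 * v$1 + a$2 * v$2 = 0" using assms(3) by (simp add: inner_vec_def sum_2)
    have h2: "v$1 * a$2 - v$2 * a$1 = 0" using \<open>det2 v a = 0\<close> by (simp add: det2_def)
    have e1: "(v$1 * v$1 + v$2 * v$2) * a$1 = 0" and e2: "(v$1 * v$1 + v$2 * v$2) * a$2 = 0"
      using h1 h2 by algebra+
    have nz: "v$1 * v$1 + v$2 * v$2 \<noteq> 0" using assms(2)
      by (simp add: sum_squares_eq_zero_iff vec2_eq)
    have "a$1 = 0" using e1 nz by (metis mult_eq_0_iff)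
    moreover have "a$2 = 0" using e2 nz by (metis mult_eq_0_iff)
    ultimately have "a = 0" by (simp add: vec2_eq)
    with assms(1) show False by simp
  qed
  have "(det2 v a)^2 * (det2 v u * det2 v u') = (v \<bullet> v)^2 * ((a \<bullet> u) * (a \<bullet> u'))"
    using i1[of u] i1[of u'] by (simp add: power2_eq_square algebra_simps)
  also have "\<dots> \<ge> 0" using assms by simp
  finally show ?thesis using \<open>det2 v a \<noteq> 0\<close>
    by (metis zero_less_power2 zero_le_mult_iff not_le)
qed


lemma per_mult:
  fixes P :: "nat \<Rightarrow> 'a" and n :: nat
  assumes "\<forall>i. P (i + 2*n) = P i"
  shows "P (x + 2*n*q) = P x"
proof (induction q)
  case 0 then show ?case by simp
next
  case (Suc q)
  have "P (x + 2*n*Suc q) = P ((x + 2*n*q) + 2*n)" by (simp add: algebra_simps)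
  also have "\<dots> = P (x + 2*n*q)" using assms by blast
  finally show ?case using Suc by simp
qed

lemma per_mod:
  fixes P :: "nat \<Rightarrow> 'a" and n :: nat
  assumes "\<forall>i. P (i + 2*n) = P i"
  shows "P x = P (x mod (2*n))"
proof -
  have "x = x mod (2*n) + 2*n*(x div (2*n))" by simp
  then have "P x = P (x mod (2*n) + 2*n*(x div (2*n)))" by metis
  also have "\<dots> = P (x mod (2*n))" by (rule per_mult[OF assms])
  finally show ?thesis .
qed

lemma seg_in_curve:
  fixes P :: "nat \<Rightarrow> real^2" and n :: nat
  assumes "\<forall>i. P (i + 2*n) = P i" "n \<ge> 1"
  shows "closed_segment (P j) (P (Suc j)) \<subseteq> polygon_curve n P"
proof -
  define k where "k = (if j mod (2*n) = 0 then 2*n else j mod (2*n))"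
  have k1: "k \<in> {1..2*n}" using assms(2) unfolding k_def
    by (auto simp: less_imp_le)
  have km: "k mod (2*n) = j mod (2*n)" unfolding k_def by auto
  have "P k = P j" using per_mod[OF assms(1), of k] per_mod[OF assms(1), of j] km by simp
  moreover have "P (k+1) = P (Suc j)"
  proof -
    have "(k+1) mod (2*n) = (j+1) mod (2*n)" using km by (metis mod_add_left_eq)
    then show ?thesis using per_mod[OF assms(1), of "k+1"] per_mod[OF assms(1), of "j+1"] by simp
  qed
  moreover have "closed_segment (P k) (P (k+1)) \<subseteq> polygon_curve n P"
    unfolding polygon_curve_def by (rule UN_upper[OF k1])
  ultimately show ?thesis by simp
qed

lemma convex_turn:
  assumes "CPOS n P"
  shows "det2 (P (Suc j) - P j) (P (Suc (Suc j)) - P (Suc j))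
       * det2 (P (Suc (Suc j)) - P (Suc j)) (P (Suc (Suc (Suc j))) - P (Suc (Suc j))) \<ge> 0"
proof -
  from assms obtain K where n2: "n \<ge> 2" and per: "\<forall>i. P (i + 2*n) = P i"
    and K: "convex K" "compact K" "interior K \<noteq> {}" "frontier K = polygon_curve n P"
    and adj: "\<forall>i. \<not> parallel2 (P (i+1) - P i) (P (i+2) - P (i+1))"
    unfolding CPOS_def by blast
  have clK: "closed K" using K(2) by (simp add: compact_imp_closed)
  have segK: "closed_segment (P i) (P (Suc i)) \<subseteq> K" for i
  proof -
    have "closed_segment (P i) (P (Suc i)) \<subseteq> frontier K" using seg_in_curve[OF per] n2 K(4) by simp
    also have "\<dots> \<subseteq> K" using clK by (simp add: frontier_subset_closed)
    finally show ?thesis .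
  qed
  have PK: "P i \<in> K" for i using segK[of i] by auto
  define e where "e = Suc j"
  define m where "m = midpoint (P e) (P (Suc e))"
  have mfr: "m \<in> frontier K"
    using seg_in_curve[OF per, of e] n2 K(4) unfolding m_def by (auto simp: midpoint_in_closed_segment)
  have "m \<in> closure K" "m \<notin> rel_interior K"
    using mfr rel_interior_nonempty_interior[OF K(3)] by (auto simp: frontier_def)
  then obtain a where a0: "a \<noteq> 0" and sup: "\<And>y. y \<in> closure K \<Longrightarrow> a \<bullet> m \<le> a \<bullet> y"
    using supporting_hyperplane_relative_frontier[OF K(1)] by metis
  have sup': "a \<bullet> m \<le> a \<bullet> P i" for i using sup[of "P i"] PK[of i] clK by simp
  have am: "a \<bullet> m = (a \<bullet> P e + a \<bullet> P (Suc e)) / 2"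
    unfolding m_def midpoint_def by (simp add: inner_add_right)
  have h1a: "a \<bullet> P e = a \<bullet> m"
    using sup'[of e] sup'[of "Suc e"] am by (simp add: field_simps)
  have h1b: "a \<bullet> P (Suc e) = a \<bullet> m"
    using sup'[of e] sup'[of "Suc e"] am by (simp add: field_simps)
  note h1 = h1a h1b
  have av: "a \<bullet> (P (Suc e) - P e) = 0" using h1 by (simp add: inner_diff_right)
  have vnz: "P (Suc e) - P e \<noteq> 0"
  proof
    assume "P (Suc e) - P e = 0"
    then have "parallel2 (P (j+1) - P j) (P (j+2) - P (j+1))"
      unfolding parallel2_def e_def by (simp add: det2_def)
    with adj show False by blast
  qed
  have u1: "a \<bullet> (P j - P e) \<ge> 0" using sup'[of j] h1 by (simp add: inner_diff_right)
  have u2: "a \<bullet> (P (Suc (Suc e)) - P (Suc e)) \<ge> 0" using sup'[of "Suc (Suc e)"] h1 by (simp add: inner_diff_right)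
  have "det2 (P (Suc e) - P e) (P j - P e) * det2 (P (Suc e) - P e) (P (Suc (Suc e)) - P (Suc e)) \<ge> 0"
    by (rule perp_sign[OF a0 vnz av u1 u2])
  moreover have "det2 (P (Suc e) - P e) (P j - P e) = det2 (P (Suc j) - P j) (P (Suc (Suc j)) - P (Suc j))"
    unfolding e_def det2_def by (simp add: algebra_simps)
  ultimately show ?thesis unfolding e_def by simp
qed


theorem mainTheorem1:
  fixes n :: nat and P :: "nat \<Rightarrow> real^2"
  assumes "CPOS n P"
  shows "((\<forall>i\<in>{1..n}. \<forall>j\<in>{1..n}. Dpt n P i = Dpt n P j)
            \<longleftrightarrow> (\<forall>i\<in>{1..n}. \<forall>j\<in>{1..n}. Mpt n P i = Mpt n P j))
       \<and> ((\<forall>i\<in>{1..n}. \<forall>j\<in>{1..n}. Mpt n P i = Mpt n P j)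
            \<longleftrightarrow> (\<exists>Oc. \<forall>i\<in>{1..n}. P (i+n) - Oc = Oc - P i))"
proof -
  from assms have n2: "n \<ge> 2" and per: "\<forall>i. P (i + 2*n) = P i"
    and adj: "\<forall>i. \<not> parallel2 (P (i+1) - P i) (P (i+2) - P (i+1))"
    and par: "\<forall>i. parallel2 (P (i+n+1) - P (i+n)) (P (i+1) - P i)"
    and ori: "\<forall>i j. 1 \<le> i \<longrightarrow> i < j \<longrightarrow> j \<le> n \<longrightarrow> det2 (P (i+1) - P i) (P (j+1) - P j) > 0"
    unfolding CPOS_def by blast+
  define v where "v k = P (Suc k) - P k" for k
  define w where "w k = P (k + n) - P k" for k
  have t_nz: "det2 (v j) (v (Suc j)) \<noteq> 0" for j
    using adj[rule_format, of j] unfolding parallel2_def v_def by (simp add: numeral_2_eq_2)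
  have conv: "det2 (v j) (v (Suc j)) * det2 (v (Suc j)) (v (Suc (Suc j))) \<ge> 0" for j
    using convex_turn[OF assms, of j] unfolding v_def .
  have ori': "det2 (v i) (v j) > 0" if "1 \<le> i" "i < j" "j \<le> n" for i j
    using ori that unfolding v_def by simp
  have t1: "det2 (v 1) (v (Suc 1)) > 0" using ori'[of 1 2] n2 by (simp add: numeral_2_eq_2)
  have t0: "det2 (v 0) (v (Suc 0)) > 0"
  proof (rule ccontr)
    assume "\<not> ?thesis"
    then have "det2 (v 0) (v (Suc 0)) < 0" using t_nz[of 0] by linarith
    then have "det2 (v 0) (v (Suc 0)) * det2 (v (Suc 0)) (v (Suc (Suc 0))) < 0"
      using t1 by (simp add: mult_neg_pos)
    then show False using conv[of 0] by linarith
  qed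
  have t_pos: "det2 (v j) (v (Suc j)) > 0" for j
  proof (induction j)
    case 0 then show ?case using t0 by simp
  next
    case (Suc j)
    show ?case
    proof (rule ccontr)
      assume "\<not> ?case"
      then have "det2 (v (Suc j)) (v (Suc (Suc j))) < 0" using t_nz[of "Suc j"] by linarith
      then have "det2 (v j) (v (Suc j)) * det2 (v (Suc j)) (v (Suc (Suc j))) < 0"
        using Suc.IH by (simp add: mult_pos_neg)
      then show False using conv[of j] by linarith
    qed
  qed
  have vnz: "v j \<noteq> 0" for j
    using t_nz[of j] by (auto simp: det2_zero_left)
  have "\<exists>m. v (j + n) = m *\<^sub>R v j" for j
  proof -
    have "det2 (v (j+n)) (v j) = 0" using par[rule_format, of j] unfolding parallel2_def v_def by simp
    then have "det2 (v j) (v (j+n)) = 0" by (simp add: det2_swap[of "v j"])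
    then show ?thesis using par_scale vnz by blast
  qed
  then obtain mu where mu: "\<And>j. v (j + n) = mu j *\<^sub>R v j" by metis
  have mu1: "mu 1 < 0"
  proof -
    have "det2 (v n) (v (Suc n)) > 0" by (rule t_pos)
    moreover have "v (Suc n) = mu 1 *\<^sub>R v 1" using mu[of 1] by simp
    ultimately have "mu 1 * det2 (v n) (v 1) > 0" by (simp add: det2_scale_right)
    moreover have "det2 (v n) (v 1) < 0" using ori'[of 1 n] n2 det2_swap[of "v n" "v 1"] by simp
    ultimately show ?thesis by (simp add: zero_less_mult_iff)
  qed
  have mu_neg: "mu j < 0" if "j \<ge> 1" for j
    using that
  proof (induction j rule: dec_induct)
    case base then show ?case by (rule mu1)
  next
    case (step j)
    have "det2 (v (j+n)) (v (Suc (j+n))) > 0" by (rule t_pos)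
    moreover have "v (Suc (j+n)) = mu (Suc j) *\<^sub>R v (Suc j)" using mu[of "Suc j"] by simp
    ultimately have "mu j * mu (Suc j) * det2 (v j) (v (Suc j)) > 0"
      using mu[of j] by (simp add: det2_scale_right det2_scale_left mult.assoc mult.left_commute)
    then have "mu j * mu (Suc j) > 0" using t_pos[of j] by (simp add: zero_less_mult_iff)
    then show ?case using step.IH by (simp add: zero_less_mult_iff)
  qed
  have A: "det2 (w i) (v i) < 0" if i: "i \<in> {1..n}" for i
  proof -
    have "w i = (\<Sum>k=i..<i+n. v k)" unfolding w_def v_def by (simp add: sum_Suc_diff')
    then have "det2 (w i) (v i) = (\<Sum>k=i..<i+n. det2 (v k) (v i))" by (simp add: det2_sum_left)
    also have "\<dots> = det2 (v i) (v i) + (\<Sum>k=Suc i..<i+n. det2 (v k) (v i))"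
      using n2 by (subst sum.atLeast_Suc_lessThan) auto
    also have "\<dots> = (\<Sum>k=Suc i..<i+n. det2 (v k) (v i))" by (simp add: det2_self)
    also have "\<dots> < 0"
    proof -
      have neg: "det2 (v k) (v i) < 0" if k: "k \<in> {Suc i..<i+n}" for k
      proof (cases "k \<le> n")
        case True
        then have "det2 (v i) (v k) > 0" using ori'[of i k] i k by auto
        then show ?thesis using det2_swap[of "v k" "v i"] by simp
      next
        case False
        define j where "j = k - n"
        have kj: "k = j + n" and j1: "1 \<le> j" and ji: "j < i" using False k unfolding j_def by auto
        have "det2 (v j) (v i) > 0" using ori'[of j i] j1 ji i by auto
        moreover have "mu j < 0" using mu_neg j1 by blast
        ultimately show ?thesis unfolding kj mu[of j] by (simp add: det2_scale_left mult_neg_pos)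
      qed
      have "0 < (\<Sum>k=Suc i..<i+n. - det2 (v k) (v i))"
        using n2 neg by (intro sum_pos) auto
      then show ?thesis by (simp add: sum_negf)
    qed
    finally show ?thesis .
  qed
  have B: "det2 (w i) (w (Suc i)) > 0" if i: "i \<in> {1..n}" for i
  proof -
    have "w (Suc i) = w i + v (i+n) - v i" unfolding w_def v_def by simp
    also have "\<dots> = w i + (mu i - 1) *\<^sub>R v i" using mu[of i] by (simp add: algebra_simps)
    finally have "det2 (w i) (w (Suc i)) = (mu i - 1) * det2 (w i) (v i)"
      by (simp add: det2_add_right det2_scale_right det2_self)
    moreover have "mu i < 0" using mu_neg i by auto
    ultimately show ?thesis using A[OF i] by (simp add: mult_neg_neg)
  qed
  define gd where "gd i = great_diag n P i" for i
  have gd_iff: "x \<in> gd i \<longleftrightarrow> (\<exists>s. x = P i + s *\<^sub>R w i)" for x i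
    unfolding gd_def great_diag_def w_def by (rule aff2)
  have uniq: "\<exists>!x. x \<in> gd i \<and> x \<in> gd (i+1)" if i: "i \<in> {1..n}" for i
  proof -
    have "det2 (P (i+n) - P i) (P (i+1+n) - P (i+1)) \<noteq> 0" using B[OF i] unfolding w_def by simp
    then show ?thesis unfolding gd_def great_diag_def by (rule lines_meet)
  qed
  have Din: "Dpt n P i \<in> gd i \<and> Dpt n P i \<in> gd (i+1)" if i: "i \<in> {1..n}" for i
    unfolding Dpt_def gd_def[symmetric] using theI'[OF uniq[OF i]] .
  have Dun: "y = Dpt n P i" if i: "i \<in> {1..n}" and "y \<in> gd i" "y \<in> gd (i+1)" for i y
    unfolding Dpt_def gd_def[symmetric] using the1_equality[OF uniq[OF i]] that by blast
  have Mw: "Mpt n P i = P i + (1/2) *\<^sub>R w i" for i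
    unfolding Mpt_def w_def by (simp add: vec2_eq field_simps)
  have P2n: "P (n + 1 + n) = P 1"
  proof -
    have "n + 1 + n = 1 + 2*n" by simp
    then show ?thesis using per[rule_format, of 1] by metis
  qed
  have part2: "(\<forall>i\<in>{1..n}. \<forall>j\<in>{1..n}. Mpt n P i = Mpt n P j)
            \<longleftrightarrow> (\<exists>Oc. \<forall>i\<in>{1..n}. P (i+n) - Oc = Oc - P i)"
  proof
    assume H: "\<forall>i\<in>{1..n}. \<forall>j\<in>{1..n}. Mpt n P i = Mpt n P j"
    show "\<exists>Oc. \<forall>i\<in>{1..n}. P (i+n) - Oc = Oc - P i"
    proof (intro exI ballI)
      fix i assume "i \<in> {1..n}"
      moreover have "1 \<in> {1..n}" using n2 by auto
      ultimately have "Mpt n P 1 = Mpt n P i" using H by blast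
      moreover have "P (i+n) - Mpt n P i = Mpt n P i - P i"
        unfolding Mpt_def by (simp add: vec2_eq field_simps)
      ultimately show "P (i+n) - Mpt n P 1 = Mpt n P 1 - P i" by simp
    qed
  next
    assume "\<exists>Oc. \<forall>i\<in>{1..n}. P (i+n) - Oc = Oc - P i"
    then obtain Oc where Oc: "\<forall>i\<in>{1..n}. P (i+n) - Oc = Oc - P i" by blast
    have "Mpt n P i = Oc" if "i \<in> {1..n}" for i
    proof -
      have e: "P (i+n) - Oc = Oc - P i" using Oc that by blast
      have "P i + P (i+n) = 2 *\<^sub>R Oc"
      proof -
        have "P i + P (i+n) = P i + (P (i+n) - Oc) + Oc" by simp
        also have "\<dots> = 2 *\<^sub>R Oc" unfolding e by (simp add: scaleR_2)
        finally show ?thesis .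
      qed
      then show ?thesis unfolding Mpt_def by simp
    qed
    then show "\<forall>i\<in>{1..n}. \<forall>j\<in>{1..n}. Mpt n P i = Mpt n P j" by simp
  qed
  have part1: "(\<forall>i\<in>{1..n}. \<forall>j\<in>{1..n}. Dpt n P i = Dpt n P j)
            \<longleftrightarrow> (\<forall>i\<in>{1..n}. \<forall>j\<in>{1..n}. Mpt n P i = Mpt n P j)"
  proof
    assume H: "\<forall>i\<in>{1..n}. \<forall>j\<in>{1..n}. Mpt n P i = Mpt n P j"
    define Qc where "Qc = Mpt n P 1"
    have Oi: "Qc \<in> gd i" if "i \<in> {1..n}" for i
    proof -
      have "1 \<in> {1..n}" using n2 by auto
      then have "Mpt n P i = Qc" using H that unfolding Qc_def by blast
      then have "Qc = P i + (1/2) *\<^sub>R w i" using Mw[of i] by simp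
      then show ?thesis unfolding gd_iff by blast
    qed
    have On: "Qc \<in> gd (n+1)"
    proof -
      have "Qc = P (n+1) + (1/2) *\<^sub>R (P 1 - P (n+1))"
        unfolding Qc_def Mpt_def by (simp add: vec2_eq field_simps)
      moreover have "w (n+1) = P 1 - P (n+1)" unfolding w_def using P2n by simp
      ultimately show ?thesis unfolding gd_iff by metis
    qed
    have "Dpt n P i = Qc" if i: "i \<in> {1..n}" for i
    proof -
      have "Qc \<in> gd (i+1)"
      proof (cases "i = n")
        case True then show ?thesis using On by simp
      next
        case False then show ?thesis using Oi[of "i+1"] i by auto
      qed
      then show ?thesis using Dun[OF i Oi[OF i]] by simp
    qed
    then show "\<forall>i\<in>{1..n}. \<forall>j\<in>{1..n}. Dpt n P i = Dpt n P j" by simp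
  next
    assume H: "\<forall>i\<in>{1..n}. \<forall>j\<in>{1..n}. Dpt n P i = Dpt n P j"
    define D where "D = Dpt n P 1"
    have Dall: "D \<in> gd i" if "i \<in> {1..n+1}" for i
    proof (cases "i = n+1")
      case True
      have nn: "n \<in> {1..n}" "1 \<in> {1..n}" using n2 by auto
      then have "D = Dpt n P n" using H unfolding D_def by blast
      then show ?thesis using Din[OF nn(1)] True by simp
    next
      case False
      then have ii: "i \<in> {1..n}" using that by auto
      have "1 \<in> {1..n}" using n2 by auto
      then have "D = Dpt n P i" using H ii unfolding D_def by blast
      then show ?thesis using Din[OF ii] by simp
    qed
    have "\<forall>i. \<exists>s. i \<in> {1..n+1} \<longrightarrow> D = P i + s *\<^sub>R w i"
      using Dall gd_iff by blast
    then obtain sg where sg: "\<And>i. i \<in> {1..n+1} \<Longrightarrow> D = P i + sg i *\<^sub>R w i" by metis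
    have sstep: "sg (Suc i) = sg i" if i: "i \<in> {1..n}" for i
    proof -
      have e1: "P i = D - sg i *\<^sub>R w i" using sg[of i] i by simp
      have e2: "P (Suc i) = D - sg (Suc i) *\<^sub>R w (Suc i)" using sg[of "Suc i"] i by simp
      have e3: "P (i+n) = D + (1 - sg i) *\<^sub>R w i"
        using e1 unfolding w_def by (simp add: algebra_simps)
      have e4: "P (Suc (i+n)) = D + (1 - sg (Suc i)) *\<^sub>R w (Suc i)"
        using e2 unfolding w_def by (simp add: algebra_simps)
      have "det2 (P (i+n+1) - P (i+n)) (P (i+1) - P i) = 0"
        using par[rule_format, of i] unfolding parallel2_def .
      then have "det2 (w i) (w (Suc i)) * (sg (Suc i) - sg i) = 0"
        using e1 e2 e3 e4 det2_key[of D "sg (Suc i)" "w (Suc i)" "sg i" "w i"] by simp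
      then show ?thesis using B[OF i] by simp
    qed
    have chain: "sg i = sg 1" if "i \<in> {1..n+1}" for i
    proof -
      have "1 \<le> i" "i \<le> n+1" using that by auto
      then show ?thesis
      proof (induction i rule: dec_induct)
        case base then show ?case by simp
      next
        case (step k)
        then have k: "k \<in> {1..n}" by auto
        have "sg k = sg 1" using step.IH step.prems by simp
        moreover have "sg (Suc k) = sg k" by (rule sstep[OF k])
        ultimately show ?case by simp
      qed
    qed
    have w1: "w 1 \<noteq> 0" using B[of 1] n2 by (auto simp: det2_zero_left)
    have wn: "w (n+1) = - w 1" unfolding w_def using P2n by simp
    have a1: "D = P 1 + sg 1 *\<^sub>R w 1" using sg[of 1] by simp
    have a2: "D = P (n+1) + sg 1 *\<^sub>R w (n+1)" using sg[of "n+1"] chain[of "n+1"] by simp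
    have "P (n+1) = P 1 + w 1" unfolding w_def by simp
    then have "P 1 + sg 1 *\<^sub>R w 1 = (P 1 + w 1) + sg 1 *\<^sub>R (- w 1)" using a1 a2 wn by simp
    then have "(1 - 2 * sg 1) *\<^sub>R w 1 = 0" by (auto simp: vec2_eq algebra_simps)
    then have s12: "sg 1 = 1/2" using w1 by simp
    have "Mpt n P i = D" if "i \<in> {1..n}" for i
      using sg[of i] chain[of i] that s12 Mw[of i] by simp
    then show "\<forall>i\<in>{1..n}. \<forall>j\<in>{1..n}. Mpt n P i = Mpt n P j" by simp
  qed
  show ?thesis using part1 part2 by blast
qed

end
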